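(* Let $\mathcal{Z}$ be a data space with unknown distribution $\mu$, let $S=(Z_1,\dots,Z_n)$ have i.i.d. entries $Z_i\sim\mu$, let the learning algorithm be a Markov kernel $P_{W|S}$ producing a hypothesis $W$ in a hypothesis class $\mathcal{W}$, with $P_W$ the marginal of $W$ and $P_{W,Z_i}$ the joint law of $(W,Z_i)$. Let $l:\mathcal{W}\times\mathcal{Z}\to\mathbb{R}^+$ be a loss function and assume that for every $i=1,\dots,n$, $l(W,Z_i)$ is $\sigma$-subgaussian when $(W,Z_i)$ is distributed according to $\widehat{P}_{W,Z_i}=\frac{P_{W,Z_i}+P_W\otimes\mu}{2}$. Then $$|\overline{\text{gen}}(P_{W|S},\mu)|\le\frac2n\sum_{i=1}^n\sqrt{2\sigma^2 I_{JS}(W;Z_i)}.$$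
   Context: A random variable $X$ is $\sigma$-subgaussian if $\mathbb{E}[e^{\lambda(X-\mathbb{E}X)}]\le e^{\lambda^2\sigma^2/2}$ for all $\lambda\in\mathbb{R}$. Expected generalization error: $\overline{\text{gen}}(P_{W|S},\mu)=\mathbb{E}_{P_{W,S}}\big[\int l(W,z)\,\mu(dz)-\frac1n\sum_{i=1}^n l(W,Z_i)\big]$. Jensen–Shannon divergence: $JS(P,Q)=\frac12 KL\big(P\|\tfrac{P+Q}{2}\big)+\frac12 KL\big(Q\|\tfrac{P+Q}{2}\big)$, with $KL$ the Kullback–Leibler divergence (natural logarithm). Jensen–Shannon information: $I_{JS}(W;Z_i)=JS(P_{W,Z_i},P_W\otimes P_{Z_i})$, where here $P_{Z_i}=\mu$. *)

theory Defs
  imports "HOL-Probability.Probability"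
begin

(* Kullback-Leibler divergence KL(P || Q), natural logarithm.
   Note: library KL_divergence b M N is KL(N || M). *)
definition KL :: "'a measure \<Rightarrow> 'a measure \<Rightarrow> real" where
  "KL P Q = KL_divergence (exp 1) Q P"

definition mixture2 :: "'a measure \<Rightarrow> 'a measure \<Rightarrow> 'a measure" where
  "mixture2 P Q = measure_of (space P) (sets P) (\<lambda>A. (emeasure P A + emeasure Q A) / 2)"

definition JS :: "'a measure \<Rightarrow> 'a measure \<Rightarrow> real" where
  "JS P Q = 1/2 * KL P (mixture2 P Q) + 1/2 * KL Q (mixture2 P Q)"

definition subgaussian :: "'a measure \<Rightarrow> ('a \<Rightarrow> real) \<Rightarrow> real \<Rightarrow> bool" where
  "subgaussian M X \<sigma> \<longleftrightarrow> integrable M X \<and>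
     (\<forall>t::real. (\<integral>\<^sup>+ x. ennreal (exp (t * (X x - (\<integral>y. X y \<partial>M)))) \<partial>M)
                 \<le> ennreal (exp (t\<^sup>2 * \<sigma>\<^sup>2 / 2)))"

definition sample_law :: "'z measure \<Rightarrow> nat \<Rightarrow> (nat \<Rightarrow> 'z) measure" where
  "sample_law \<mu> n = PiM {..<n} (\<lambda>_. \<mu>)"

definition joint_WS :: "'w measure \<Rightarrow> 'z measure \<Rightarrow> nat \<Rightarrow> ((nat \<Rightarrow> 'z) \<Rightarrow> 'w measure)
    \<Rightarrow> ('w \<times> (nat \<Rightarrow> 'z)) measure" where
  "joint_WS MW \<mu> n K = sample_law \<mu> n \<bind>
      (\<lambda>s. K s \<bind> (\<lambda>w. return (MW \<Otimes>\<^sub>M sample_law \<mu> n) (w, s)))"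

definition law_W :: "'w measure \<Rightarrow> 'z measure \<Rightarrow> nat \<Rightarrow> ((nat \<Rightarrow> 'z) \<Rightarrow> 'w measure) \<Rightarrow> 'w measure" where
  "law_W MW \<mu> n K = distr (joint_WS MW \<mu> n K) MW fst"

definition law_WZ :: "'w measure \<Rightarrow> 'z measure \<Rightarrow> nat \<Rightarrow> ((nat \<Rightarrow> 'z) \<Rightarrow> 'w measure) \<Rightarrow> nat
    \<Rightarrow> ('w \<times> 'z) measure" where
  "law_WZ MW \<mu> n K i = distr (joint_WS MW \<mu> n K) (MW \<Otimes>\<^sub>M \<mu>) (\<lambda>p. (fst p, snd p i))"

definition I_JS :: "'w measure \<Rightarrow> 'z measure \<Rightarrow> nat \<Rightarrow> ((nat \<Rightarrow> 'z) \<Rightarrow> 'w measure) \<Rightarrow> nat \<Rightarrow> real" where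
  "I_JS MW \<mu> n K i = JS (law_WZ MW \<mu> n K i) (law_W MW \<mu> n K \<Otimes>\<^sub>M \<mu>)"

definition gen_err :: "'w measure \<Rightarrow> 'z measure \<Rightarrow> nat \<Rightarrow> ((nat \<Rightarrow> 'z) \<Rightarrow> 'w measure)
    \<Rightarrow> ('w \<Rightarrow> 'z \<Rightarrow> real) \<Rightarrow> real" where
  "gen_err MW \<mu> n K l = (\<integral>p. (\<integral>z. l (fst p) z \<partial>\<mu>) - (\<Sum>i<n. l (fst p) (snd p i)) / real n
      \<partial>joint_WS MW \<mu> n K)"

end

theory Submission
  imports Defs
begin


lemma young_exp:
  fixes x y :: real assumes "0 \<le> y"
  shows "x * y \<le> y * ln y - y + exp x"
proof (cases "y = 0")
  case True then show ?thesis by simp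
next
  case False
  then have y: "0 < y" using assms by simp
  have "1 + (x - ln y) \<le> exp (x - ln y)" by (rule exp_ge_add_one_self)
  also have "\<dots> = exp x / y" using y by (simp add: exp_diff)
  finally have "y * (1 + (x - ln y)) \<le> exp x" using y by (simp add: field_simps)
  then show ?thesis by (simp add: algebra_simps)
qed

lemma xlnx_bound:
  fixes y :: real assumes "0 \<le> y" "y \<le> 2"
  shows "\<bar>y * ln y\<bar> \<le> 2"
proof (cases "y = 0")
  case True then show ?thesis by simp
next
  case False
  then have y: "0 < y" using assms by simp
  have "ln y \<le> y - 1" using y by (rule ln_le_minus_one)
  then have u: "y * ln y \<le> y * (y - 1)" using y by (simp add: mult_left_mono)
  have "ln (1/y) \<le> 1/y - 1" using y by (intro ln_le_minus_one) simp
  then have "- ln y \<le> 1/y - 1" using y by (simp add: ln_div)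
  then have "y * (- ln y) \<le> y * (1/y - 1)" using y by (intro mult_left_mono) auto
  then have l: "- (y * ln y) \<le> 1 - y" using y by (simp add: algebra_simps)
  have "y * y \<le> 2 * y" using assms by (intro mult_right_mono) auto
  then have "y * (y - 1) \<le> 2" using assms by (simp add: algebra_simps)
  then show ?thesis using u l assms by linarith
qed

lemma quad_opt:
  fixes D K s :: real
  assumes "\<And>t. t * D \<le> K + t\<^sup>2 * s\<^sup>2 / 2"
  shows "\<bar>D\<bar> \<le> sqrt (2 * s\<^sup>2 * K)"
proof -
  have K: "0 \<le> K" using assms[of 0] by simp
  show ?thesis
  proof (cases "s = 0")
    case True
    have "D = 0"
    proof (rule ccontr)
      assume "D \<noteq> 0"
      have "((K + 1) / D) * D \<le> K" using assms[of "(K+1)/D"] True by simp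
      then show False using \<open>D \<noteq> 0\<close> by simp
    qed
    then show ?thesis using K by simp
  next
    case False
    then have s2: "0 < s\<^sup>2" by simp
    have "(D / s\<^sup>2) * D \<le> K + (D / s\<^sup>2)\<^sup>2 * s\<^sup>2 / 2" by (rule assms)
    also have "(D / s\<^sup>2)\<^sup>2 * s\<^sup>2 / 2 = (D / s\<^sup>2) * D / 2" using s2 by (simp add: power2_eq_square)
    finally have "(D / s\<^sup>2) * D / 2 \<le> K" by linarith
    then have "D\<^sup>2 / (2 * s\<^sup>2) \<le> K" by (simp add: power2_eq_square)
    then have "D\<^sup>2 \<le> K * (2 * s\<^sup>2)" using s2 by (simp add: divide_le_eq)
    then have "D\<^sup>2 \<le> 2 * s\<^sup>2 * K" by (simp add: algebra_simps)
    then show ?thesis using real_le_rsqrt[of "\<bar>D\<bar>"] by simp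
  qed
qed



lemma DV:
  fixes M :: "'a measure" and fr g :: "'a \<Rightarrow> real" and \<sigma> :: real
  assumes M: "prob_space M"
    and fr[measurable]: "fr \<in> borel_measurable M"
    and frb: "AE x in M. 0 \<le> fr x \<and> fr x \<le> 2"
    and Pp: "prob_space (density M fr)"
    and gi: "integrable M g"
    and mgf: "\<And>t. (\<integral>\<^sup>+ x. ennreal (exp (t * (g x - (\<integral>y. g y \<partial>M)))) \<partial>M) \<le> ennreal (exp (t\<^sup>2 * \<sigma>\<^sup>2 / 2))"
  shows "\<bar>(\<integral>x. g x \<partial>density M fr) - (\<integral>x. g x \<partial>M)\<bar>
           \<le> sqrt (2 * \<sigma>\<^sup>2 * KL_divergence (exp 1) M (density M fr))
         \<and> 0 \<le> KL_divergence (exp 1) M (density M fr) \<and> integrable (density M fr) g"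
proof -
  interpret prob_space M by fact
  have g[measurable]: "g \<in> borel_measurable M" using gi by auto
  have fr0: "AE x in M. 0 \<le> fr x" using frb by auto
  define c where "c = (\<integral>y. g y \<partial>M)"
  define K where "K = KL_divergence (exp 1) M (density M fr)"
  have K: "K = (\<integral>x. fr x * ln (fr x) \<partial>M)"
    unfolding K_def by (subst KL_density) (use fr0 in \<open>auto simp: log_def\<close>)
  have int_frln: "integrable M (\<lambda>x. fr x * ln (fr x))"
    by (rule integrable_const_bound[where B=2]) (use frb xlnx_bound in auto)
  have int_fr: "integrable M fr"
    by (rule integrable_const_bound[where B=2]) (use frb in auto)
  have int_frg: "integrable M (\<lambda>x. fr x * g x)"
  proof (rule Bochner_Integration.integrable_bound[OF integrable_mult_right[OF gi, of 2]])
    show "AE x in M. norm (fr x * g x) \<le> norm (2 * g x)"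
      using frb by eventually_elim (auto simp: abs_mult intro!: mult_right_mono)
  qed simp
  have Pg: "(\<integral>x. g x \<partial>density M fr) = (\<integral>x. fr x * g x \<partial>M)"
    by (subst integral_density) (use fr0 in auto)
  have fr1: "(\<integral>x. fr x \<partial>M) = 1"
  proof -
    have "(\<integral>x. (1::real) \<partial>density M fr) = 1"
      using prob_space.prob_space[OF Pp] by (simp add: lebesgue_integral_const)
    moreover have "(\<integral>x. 1 \<partial>density M fr) = (\<integral>x. fr x \<partial>M)"
      by (subst integral_density) (use fr0 in auto)
    ultimately show ?thesis by simp
  qed
  have main: "t * ((\<integral>x. fr x * g x \<partial>M) - c) \<le> K + t\<^sup>2 * \<sigma>\<^sup>2 / 2" for t
  proof -
    define h where "h x = t * (g x - c)" for x
    have hm[measurable]: "h \<in> borel_measurable M" unfolding h_def by measurable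
    have nnfin: "(\<integral>\<^sup>+ x. ennreal (exp (h x)) \<partial>M) \<le> ennreal (exp (t\<^sup>2 * \<sigma>\<^sup>2 / 2))"
      using mgf[of t] unfolding h_def c_def .
    have inte: "integrable M (\<lambda>x. exp (h x))"
    proof (rule integrableI_nonneg)
      show "(\<integral>\<^sup>+ x. ennreal (exp (h x)) \<partial>M) < \<infinity>"
        using le_less_trans[OF nnfin ennreal_less_top] unfolding infinity_ennreal_def .
      show "(\<lambda>x. exp (h x)) \<in> borel_measurable M" by measurable
      show "AE x in M. 0 \<le> exp (h x)" by simp
    qed
    define Z where "Z = (\<integral>x. exp (h x) \<partial>M)"
    have eqZ: "ennreal Z = (\<integral>\<^sup>+ x. ennreal (exp (h x)) \<partial>M)"
      unfolding Z_def by (rule nn_integral_eq_integral[symmetric, OF inte]) simp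
    have "ennreal Z \<le> ennreal (exp (t\<^sup>2 * \<sigma>\<^sup>2 / 2))" unfolding eqZ by (rule nnfin)
    then have Zle: "Z \<le> exp (t\<^sup>2 * \<sigma>\<^sup>2 / 2)" using ennreal_le_iff[of "exp (t\<^sup>2 * \<sigma>\<^sup>2 / 2)" Z] by simp
    have inth: "integrable M h" unfolding h_def using gi by auto
    have "(\<integral>x. h x \<partial>M) = 0" unfolding h_def c_def using gi by (simp add: prob_space)
    have "(\<integral>x. 1 + h x \<partial>M) \<le> Z" unfolding Z_def
    proof (rule integral_mono)
      show "integrable M (\<lambda>x. 1 + h x)" by (intro Bochner_Integration.integrable_add integrable_const inth)
      show "integrable M (\<lambda>x. exp (h x))" by (rule inte)
      show "1 + h x \<le> exp (h x)" for x by (rule exp_ge_add_one_self)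
    qed
    then have Z1: "1 \<le> Z" using inth \<open>(\<integral>x. h x \<partial>M) = 0\<close> by (simp add: prob_space)
    define L where "L = ln Z"
    have "ln Z \<le> ln (exp (t\<^sup>2 * \<sigma>\<^sup>2 / 2))" using Z1 Zle by (intro ln_mono) auto
    then have LZ: "L \<le> t\<^sup>2 * \<sigma>\<^sup>2 / 2" unfolding L_def by simp
    have lameq: "(\<lambda>x. (h x - L) * fr x) = (\<lambda>x. t * (fr x * g x) - (t * c + L) * fr x)"
      unfolding h_def by (rule ext) (simp add: algebra_simps)
    have int_hL: "integrable M (\<lambda>x. (h x - L) * fr x)"
      unfolding lameq by (intro Bochner_Integration.integrable_diff integrable_mult_right int_frg int_fr)
    have eqL: "(\<integral>x. (h x - L) * fr x \<partial>M) = t * ((\<integral>x. fr x * g x \<partial>M) - c) - L"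
    proof -
      have "(\<integral>x. (h x - L) * fr x \<partial>M) = (\<integral>x. t * (fr x * g x) \<partial>M) - (\<integral>x. (t * c + L) * fr x \<partial>M)"
        unfolding lameq by (intro Bochner_Integration.integral_diff integrable_mult_right int_frg int_fr)
      also have "\<dots> = t * (\<integral>x. fr x * g x \<partial>M) - (t * c + L) * (\<integral>x. fr x \<partial>M)"
        by simp
      finally show ?thesis using fr1 by (simp add: algebra_simps)
    qed
    have "t * ((\<integral>x. fr x * g x \<partial>M) - c) - L = (\<integral>x. (h x - L) * fr x \<partial>M)"
      using eqL by simp
    also have "\<dots> \<le> (\<integral>x. fr x * ln (fr x) - fr x + exp (h x) / Z \<partial>M)"
    proof (rule integral_mono_AE)
      show "integrable M (\<lambda>x. (h x - L) * fr x)" by (rule int_hL)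
      show "integrable M (\<lambda>x. fr x * ln (fr x) - fr x + exp (h x) / Z)"
        by (intro Bochner_Integration.integrable_add Bochner_Integration.integrable_diff integrable_divide int_frln int_fr inte)
      show "AE x in M. (h x - L) * fr x \<le> fr x * ln (fr x) - fr x + exp (h x) / Z"
        using frb proof eventually_elim
        case (elim x)
        then have "(h x - L) * fr x \<le> fr x * ln (fr x) - fr x + exp (h x - L)"
          by (intro young_exp) auto
        also have "exp (h x - L) = exp (h x) / Z" unfolding L_def using Z1 by (simp add: exp_diff)
        finally show ?case .
      qed
    qed
    also have "\<dots> = (\<integral>x. fr x * ln (fr x) \<partial>M) - (\<integral>x. fr x \<partial>M) + (\<integral>x. exp (h x) \<partial>M) / Z"
      by (subst Bochner_Integration.integral_add) (use int_frln int_fr inte in \<open>auto intro!: Bochner_Integration.integrable_diff simp: Bochner_Integration.integral_diff\<close>)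
    also have "\<dots> = K - 1 + 1"
      using fr1 Z1 unfolding K Z_def[symmetric] by simp
    finally show ?thesis using LZ by simp
  qed
  have "\<bar>(\<integral>x. fr x * g x \<partial>M) - c\<bar> \<le> sqrt (2 * \<sigma>\<^sup>2 * K)"
    by (rule quad_opt) (use main in \<open>simp add: mult.commute\<close>)
  moreover have "0 \<le> K" using main[of 0] by simp
  moreover have "integrable (density M fr) g"
    by (subst integrable_density) (use fr0 int_frg in auto)
  ultimately show ?thesis unfolding Pg c_def K_def by simp
qed



lemma sqrt_add_le:
  fixes a b :: real assumes "0 \<le> a" "0 \<le> b"
  shows "sqrt a + sqrt b \<le> 2 * sqrt (a / 2 + b / 2)"
proof -
  have "0 \<le> (sqrt a - sqrt b)\<^sup>2" by simp
  then have "2 * sqrt a * sqrt b \<le> a + b"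
    using assms by (simp add: power2_eq_square algebra_simps real_sqrt_mult_self)
  then have "((sqrt a + sqrt b) / 2)\<^sup>2 \<le> a / 2 + b / 2"
    using assms by (simp add: power2_eq_square algebra_simps real_sqrt_mult_self)
  then have "(sqrt a + sqrt b) / 2 \<le> sqrt (a / 2 + b / 2)" by (rule real_le_rsqrt)
  then show ?thesis by simp
qed

lemma mixture_facts:
  assumes P: "prob_space P" and Q: "prob_space Q" and sQ: "sets Q = sets P"
  shows "sets (mixture2 P Q) = sets P" "space (mixture2 P Q) = space P"
    and "\<And>A. A \<in> sets P \<Longrightarrow> emeasure (mixture2 P Q) A = (emeasure P A + emeasure Q A) / 2"
    and "prob_space (mixture2 P Q)"
proof -
  show ss: "sets (mixture2 P Q) = sets P"
    unfolding mixture2_def using sets_measure_of[OF sets.space_closed, of P] sets.sigma_sets_eq[of P] by simp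
  then show sp: "space (mixture2 P Q) = space P"
    unfolding mixture2_def by (simp add: space_measure_of_conv)
  show em: "emeasure (mixture2 P Q) A = (emeasure P A + emeasure Q A) / 2" if A: "A \<in> sets P" for A
    unfolding mixture2_def
  proof (rule emeasure_measure_of_sigma[OF sets.sigma_algebra_axioms _ _ A])
    show "positive (sets P) (\<lambda>A. (emeasure P A + emeasure Q A) / 2)"
      unfolding positive_def by simp
    show "countably_additive (sets P) (\<lambda>A. (emeasure P A + emeasure Q A) / 2)"
      unfolding countably_additive_def
    proof (intro allI impI)
      fix F :: "nat \<Rightarrow> _" assume F: "range F \<subseteq> sets P" "disjoint_family F" "\<Union> (range F) \<in> sets P"
      have "(\<Sum>i. (emeasure P (F i) + emeasure Q (F i)) / 2) = (\<Sum>i. emeasure P (F i) + emeasure Q (F i)) / 2"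
        by simp
      also have "(\<Sum>i. emeasure P (F i) + emeasure Q (F i)) = (\<Sum>i. emeasure P (F i)) + (\<Sum>i. emeasure Q (F i))"
        by (rule suminf_add[symmetric]) auto
      also have "(\<Sum>i. emeasure P (F i)) = emeasure P (\<Union> (range F))"
        using F by (intro suminf_emeasure) auto
      also have "(\<Sum>i. emeasure Q (F i)) = emeasure Q (\<Union> (range F))"
        using F sQ by (intro suminf_emeasure) auto
      finally show "(\<Sum>i. (emeasure P (F i) + emeasure Q (F i)) / 2) = (emeasure P (\<Union> (range F)) + emeasure Q (\<Union> (range F))) / 2" .
    qed
  qed
  show "prob_space (mixture2 P Q)"
  proof
    have "emeasure (mixture2 P Q) (space (mixture2 P Q)) = (emeasure P (space P) + emeasure Q (space Q)) / 2"
      using em[of "space P"] sp sets_eq_imp_space_eq[OF sQ] by simp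
    also have "\<dots> = 1" using prob_space.emeasure_space_1[OF P] prob_space.emeasure_space_1[OF Q]
      by (simp add: one_add_one[symmetric] del: one_add_one)
    finally show "emeasure (mixture2 P Q) (space (mixture2 P Q)) = 1" .
  qed
qed



lemma density_part:
  assumes P: "prob_space P" and Q: "prob_space Q" and sQ: "sets Q = sets P"
  defines "M \<equiv> mixture2 P Q"
  shows "\<exists>fr. fr \<in> borel_measurable M \<and> (AE x in M. 0 \<le> fr x \<and> fr x \<le> 2) \<and> P = density M (\<lambda>x. ennreal (fr x))"
proof -
  note mf = mixture_facts[OF P Q sQ, folded M_def]
  interpret M: prob_space M by (rule mf(4))
  have acP: "absolutely_continuous M P"
    unfolding absolutely_continuous_def
  proof
    fix A assume "A \<in> null_sets M"
    then have A: "A \<in> sets P" "emeasure M A = 0" using mf by auto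
    then have "(emeasure P A + emeasure Q A) / 2 = 0" using mf(3) by simp
    then have "emeasure P A = 0" by (simp add: ennreal_divide_eq_0_iff)
    then show "A \<in> null_sets P" using A by auto
  qed
  have acQ: "absolutely_continuous M Q"
    unfolding absolutely_continuous_def
  proof
    fix A assume "A \<in> null_sets M"
    then have A: "A \<in> sets P" "emeasure M A = 0" using mf by auto
    then have "(emeasure P A + emeasure Q A) / 2 = 0" using mf(3) by simp
    then have "emeasure Q A = 0" by (simp add: ennreal_divide_eq_0_iff)
    then show "A \<in> null_sets Q" using A sQ by auto
  qed
  define fP where "fP = RN_deriv M P"
  define fQ where "fQ = RN_deriv M Q"
  have [measurable]: "fP \<in> borel_measurable M" "fQ \<in> borel_measurable M"
    unfolding fP_def fQ_def by auto
  have dP: "density M fP = P" unfolding fP_def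
    by (rule M.density_RN_deriv[OF acP]) (use mf in simp)
  have dQ: "density M fQ = Q" unfolding fQ_def
    by (rule M.density_RN_deriv[OF acQ]) (use mf sQ in simp)
  have "density M (\<lambda>x. fP x + fQ x) = density M (\<lambda>_. 2)"
  proof (rule measure_eqI)
    fix A assume "A \<in> sets (density M (\<lambda>x. fP x + fQ x))"
    then have A: "A \<in> sets M" by simp
    have "emeasure (density M (\<lambda>x. fP x + fQ x)) A = emeasure P A + emeasure Q A"
      using emeasure_density_add[OF A, of fP fQ] dP dQ by simp
    also have "\<dots> = 2 * ((emeasure P A + emeasure Q A) / 2)"
      unfolding ennreal_times_divide mult.commute[of 2] by (rule mult_divide_eq_ennreal[symmetric]) auto
    also have "\<dots> = emeasure (density M (\<lambda>_. 2)) A"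
      using A mf by (simp add: emeasure_density_const)
    finally show "emeasure (density M (\<lambda>x. fP x + fQ x)) A = emeasure (density M (\<lambda>_. 2)) A" .
  qed simp
  then have ae2: "AE x in M. fP x + fQ x = 2"
    by (intro M.density_unique) auto
  define fr where "fr x = enn2real (fP x)" for x
  have frm: "fr \<in> borel_measurable M" unfolding fr_def by measurable
  have aeb: "AE x in M. fP x = ennreal (fr x) \<and> 0 \<le> fr x \<and> fr x \<le> 2"
    using ae2
  proof eventually_elim
    case (elim x)
    then have le: "fP x \<le> 2" by (metis le_iff_add)
    then have "fP x \<noteq> \<top>" by (metis ennreal_numeral top_neq_numeral top_unique)
    then have "fP x = ennreal (fr x)" unfolding fr_def by (simp add: less_top)
    moreover have "fr x \<le> 2" unfolding fr_def using le
      by (metis enn2real_leI ennreal_numeral zero_le_numeral)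
    ultimately show ?case unfolding fr_def by simp
  qed
  have "P = density M (\<lambda>x. ennreal (fr x))"
    unfolding dP[symmetric] by (rule density_cong) (use frm aeb in auto)
  then show ?thesis using frm aeb by auto
qed



lemma mixture2_comm:
  assumes P: "prob_space P" and Q: "prob_space Q" and sQ: "sets Q = sets P"
  shows "mixture2 Q P = mixture2 P Q"
proof (rule measure_eqI)
  show "sets (mixture2 Q P) = sets (mixture2 P Q)"
    using mixture_facts(1)[OF P Q sQ] mixture_facts(1)[OF Q P sQ[symmetric]] sQ by simp
  fix A assume "A \<in> sets (mixture2 Q P)"
  then have "A \<in> sets Q" using mixture_facts(1)[OF Q P sQ[symmetric]] by simp
  then show "emeasure (mixture2 Q P) A = emeasure (mixture2 P Q) A"
    using mixture_facts(3)[OF P Q sQ] mixture_facts(3)[OF Q P sQ[symmetric]] sQ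
    by (simp add: add.commute)
qed

lemma JS_bound:
  assumes P: "prob_space P" and Q: "prob_space Q" and sQ: "sets Q = sets P"
    and sg: "subgaussian (mixture2 P Q) g \<sigma>"
  shows "\<bar>(\<integral>x. g x \<partial>P) - (\<integral>x. g x \<partial>Q)\<bar> \<le> 2 * sqrt (2 * \<sigma>\<^sup>2 * JS P Q)
         \<and> integrable P g \<and> integrable Q g"
proof -
  define M where "M = mixture2 P Q"
  have Mp: "prob_space M" unfolding M_def by (rule mixture_facts(4)[OF P Q sQ])
  obtain fP where fP: "fP \<in> borel_measurable M" "AE x in M. 0 \<le> fP x \<and> fP x \<le> 2"
      "P = density M (\<lambda>x. ennreal (fP x))"
    using density_part[OF P Q sQ] unfolding M_def by blast
  obtain fQ where fQ: "fQ \<in> borel_measurable M" "AE x in M. 0 \<le> fQ x \<and> fQ x \<le> 2"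
      "Q = density M (\<lambda>x. ennreal (fQ x))"
    using density_part[OF Q P sQ[symmetric]] unfolding M_def mixture2_comm[OF P Q sQ] by blast
  have gi: "integrable M g"
    and mgf: "\<And>t. (\<integral>\<^sup>+ x. ennreal (exp (t * (g x - (\<integral>y. g y \<partial>M)))) \<partial>M) \<le> ennreal (exp (t\<^sup>2 * \<sigma>\<^sup>2 / 2))"
    using sg unfolding subgaussian_def M_def by auto
  have PM: "prob_space (density M (\<lambda>x. ennreal (fP x)))" using P fP(3) by simp
  have QM: "prob_space (density M (\<lambda>x. ennreal (fQ x)))" using Q fQ(3) by simp
  note dvP = DV[OF Mp fP(1) fP(2) PM gi mgf, folded fP(3)]
  note dvQ = DV[OF Mp fQ(1) fQ(2) QM gi mgf, folded fQ(3)]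
  define KP where "KP = KL P M"
  define KQ where "KQ = KL Q M"
  have KP: "KP = KL_divergence (exp 1) M P" unfolding KP_def KL_def ..
  have KQ: "KQ = KL_divergence (exp 1) M Q" unfolding KQ_def KL_def ..
  have JS: "JS P Q = KP / 2 + KQ / 2" unfolding JS_def KP_def KQ_def M_def by simp
  have "\<bar>(\<integral>x. g x \<partial>P) - (\<integral>x. g x \<partial>Q)\<bar>
        \<le> \<bar>(\<integral>x. g x \<partial>P) - (\<integral>x. g x \<partial>M)\<bar> + \<bar>(\<integral>x. g x \<partial>Q) - (\<integral>x. g x \<partial>M)\<bar>" by linarith
  also have "\<dots> \<le> sqrt (2 * \<sigma>\<^sup>2 * KP) + sqrt (2 * \<sigma>\<^sup>2 * KQ)"
    using dvP dvQ unfolding KP KQ by (intro add_mono) auto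
  also have "\<dots> \<le> 2 * sqrt ((2 * \<sigma>\<^sup>2 * KP) / 2 + (2 * \<sigma>\<^sup>2 * KQ) / 2)"
    using dvP dvQ unfolding KP KQ by (intro sqrt_add_le) auto
  also have "(2 * \<sigma>\<^sup>2 * KP) / 2 + (2 * \<sigma>\<^sup>2 * KQ) / 2 = 2 * \<sigma>\<^sup>2 * JS P Q"
    unfolding JS by (simp add: algebra_simps)
  finally show ?thesis using dvP dvQ by simp
qed


theorem corollary1:
  fixes MW :: "'w measure" and \<mu> :: "'z measure" and n :: nat
    and K :: "(nat \<Rightarrow> 'z) \<Rightarrow> 'w measure" and l :: "'w \<Rightarrow> 'z \<Rightarrow> real" and \<sigma> :: real
  assumes "prob_space \<mu>"
    and "n > 0"
    and "K \<in> sample_law \<mu> n \<rightarrow>\<^sub>M prob_algebra MW"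
    and "(\<lambda>(w, z). l w z) \<in> borel_measurable (MW \<Otimes>\<^sub>M \<mu>)"
    and "\<And>w z. l w z \<ge> 0"
    and "\<And>i. i < n \<Longrightarrow> subgaussian (mixture2 (law_WZ MW \<mu> n K i) (law_W MW \<mu> n K \<Otimes>\<^sub>M \<mu>))
                                    (\<lambda>(w, z). l w z) \<sigma>"
  shows "\<bar>gen_err MW \<mu> n K l\<bar> \<le> 2 / real n * (\<Sum>i<n. sqrt (2 * \<sigma>\<^sup>2 * I_JS MW \<mu> n K i))"
proof -
  note mu = assms(1) and npos = assms(2) and Km[measurable] = assms(3) and lm[measurable] = assms(4)
  define S where "S = sample_law \<mu> n"
  define J where "J = joint_WS MW \<mu> n K"
  define PW where "PW = law_W MW \<mu> n K"
  define Pz where "Pz i = law_WZ MW \<mu> n K i" for i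
  define Q where "Q = PW \<Otimes>\<^sub>M \<mu>"
  define l' where "l' = (\<lambda>(w, z). l w z)"
  have l'm[measurable]: "l' \<in> borel_measurable (MW \<Otimes>\<^sub>M \<mu>)" unfolding l'_def by (rule lm)
  have Sp: "prob_space S" unfolding S_def sample_law_def by (intro prob_space_PiM mu)
  have KmS[measurable]: "K \<in> S \<rightarrow>\<^sub>M prob_algebra MW" unfolding S_def by (rule Km)
  have Bm: "(\<lambda>s. K s \<bind> (\<lambda>w. return (MW \<Otimes>\<^sub>M S) (w, s))) \<in> S \<rightarrow>\<^sub>M prob_algebra (MW \<Otimes>\<^sub>M S)"
    by measurable
  have SS: "S \<in> space (prob_algebra S)" using Sp by (simp add: space_prob_algebra)
  have Jp: "prob_space J" unfolding J_def joint_WS_def S_def[symmetric]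
    by (rule prob_space_bind'[OF SS Bm])
  have sJ: "sets J = sets (MW \<Otimes>\<^sub>M S)" unfolding J_def joint_WS_def S_def[symmetric]
    by (rule sets_bind'[OF SS Bm])
  interpret J: prob_space J by (rule Jp)
  have fstm[measurable]: "fst \<in> J \<rightarrow>\<^sub>M MW"
    unfolding measurable_cong_sets[OF sJ refl] by (rule measurable_fst)
  have zim[measurable]: "(\<lambda>p. (fst p, snd p i)) \<in> J \<rightarrow>\<^sub>M MW \<Otimes>\<^sub>M \<mu>" if "i < n" for i
    unfolding measurable_cong_sets[OF sJ refl] S_def sample_law_def by measurable (simp add: that)
  have PWp: "prob_space PW" unfolding PW_def law_W_def J_def[symmetric] by (rule J.prob_space_distr[OF fstm])
  have sPW: "sets PW = sets MW" unfolding PW_def law_W_def by simp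
  have Pzp: "prob_space (Pz i)" if "i < n" for i
    unfolding Pz_def law_WZ_def J_def[symmetric] by (rule J.prob_space_distr[OF zim[OF that]])
  have sPz: "sets (Pz i) = sets (MW \<Otimes>\<^sub>M \<mu>)" for i unfolding Pz_def law_WZ_def by simp
  have Qp: "prob_space Q" unfolding Q_def by (rule prob_space_pair[OF PWp mu])
  have sQ: "sets Q = sets (MW \<Otimes>\<^sub>M \<mu>)" unfolding Q_def by (rule sets_pair_measure_cong[OF sPW refl])
  have bound: "\<bar>(\<integral>x. l' x \<partial>Pz i) - (\<integral>x. l' x \<partial>Q)\<bar> \<le> 2 * sqrt (2 * \<sigma>\<^sup>2 * I_JS MW \<mu> n K i)
         \<and> integrable (Pz i) l' \<and> integrable Q l'" if i: "i < n" for i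
  proof -
    have "I_JS MW \<mu> n K i = JS (Pz i) Q" unfolding I_JS_def Pz_def Q_def PW_def ..
    moreover have "subgaussian (mixture2 (Pz i) Q) l' \<sigma>"
      using assms(6)[OF i] unfolding Pz_def Q_def PW_def l'_def .
    ultimately show ?thesis using JS_bound[OF Pzp[OF i] Qp] sQ sPz by simp
  qed
  interpret mu: prob_space \<mu> by (rule mu)
  interpret PQ: pair_sigma_finite PW \<mu>
    by (intro pair_sigma_finite.intro prob_space_imp_sigma_finite PWp mu)
  define A where "A w = (\<integral>z. l w z \<partial>\<mu>)" for w
  have Am[measurable]: "A \<in> borel_measurable MW" unfolding A_def
    by (rule mu.borel_measurable_lebesgue_integral) (use lm in simp)
  have intQ: "integrable Q l'" using bound[OF npos] by simp
  have intA: "integrable PW A"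
    using PQ.integrable_fst'[OF intQ[unfolded Q_def]] unfolding A_def l'_def by simp
  have eqA: "(\<integral>w. A w \<partial>PW) = (\<integral>x. l' x \<partial>Q)"
    using PQ.integral_fst'[OF intQ[unfolded Q_def]] unfolding A_def l'_def Q_def by simp
  have PWd: "PW = distr J MW fst" unfolding PW_def law_W_def J_def ..
  have intJA: "integrable J (\<lambda>p. A (fst p))"
    using intA unfolding PWd by (subst (asm) integrable_distr_eq) auto
  have JA: "(\<integral>p. A (fst p) \<partial>J) = (\<integral>w. A w \<partial>PW)"
    unfolding PWd by (rule integral_distr[symmetric]) auto
  have Pzd: "Pz i = distr J (MW \<Otimes>\<^sub>M \<mu>) (\<lambda>p. (fst p, snd p i))" for i
    unfolding Pz_def law_WZ_def J_def ..
  have intJi: "integrable J (\<lambda>p. l (fst p) (snd p i))" if i: "i < n" for i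
  proof -
    have "integrable (Pz i) l'" using bound[OF i] by simp
    then show ?thesis unfolding Pzd integrable_distr_eq[OF zim[OF i] l'm] unfolding l'_def by simp
  qed
  have Ji: "(\<integral>p. l (fst p) (snd p i) \<partial>J) = (\<integral>x. l' x \<partial>Pz i)" if i: "i < n" for i
    unfolding Pzd integral_distr[OF zim[OF i] l'm] unfolding l'_def by simp
  have "gen_err MW \<mu> n K l = (\<integral>p. A (fst p) - (\<Sum>i<n. l (fst p) (snd p i)) / real n \<partial>J)"
    unfolding gen_err_def A_def J_def ..
  also have "\<dots> = (\<integral>p. A (fst p) \<partial>J) - (\<integral>p. (\<Sum>i<n. l (fst p) (snd p i)) / real n \<partial>J)"
    by (rule Bochner_Integration.integral_diff[OF intJA])
       (intro integrable_divide Bochner_Integration.integrable_sum intJi; simp)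
  also have "(\<integral>p. (\<Sum>i<n. l (fst p) (snd p i)) / real n \<partial>J) = (\<Sum>i<n. (\<integral>p. l (fst p) (snd p i) \<partial>J)) / real n"
    by (subst integral_divide_zero, subst Bochner_Integration.integral_sum) (use intJi in auto)
  also have "\<dots> = (\<Sum>i<n. (\<integral>x. l' x \<partial>Pz i)) / real n" using Ji by simp
  also have "(\<integral>p. A (fst p) \<partial>J) = (\<Sum>i<n. (\<integral>x. l' x \<partial>Q)) / real n"
    using JA eqA npos by simp
  finally have ge: "gen_err MW \<mu> n K l = (\<Sum>i<n. (\<integral>x. l' x \<partial>Q) - (\<integral>x. l' x \<partial>Pz i)) / real n"
    by (simp add: sum_subtractf diff_divide_distrib)
  have "\<bar>\<Sum>i<n. (\<integral>x. l' x \<partial>Q) - (\<integral>x. l' x \<partial>Pz i)\<bar> \<le> (\<Sum>i<n. \<bar>(\<integral>x. l' x \<partial>Q) - (\<integral>x. l' x \<partial>Pz i)\<bar>)"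
    by (rule sum_abs)
  also have "\<dots> \<le> (\<Sum>i<n. 2 * sqrt (2 * \<sigma>\<^sup>2 * I_JS MW \<mu> n K i))"
    using bound by (intro sum_mono) (simp add: abs_minus_commute)
  finally have "\<bar>gen_err MW \<mu> n K l\<bar> \<le> (\<Sum>i<n. 2 * sqrt (2 * \<sigma>\<^sup>2 * I_JS MW \<mu> n K i)) / real n"
    unfolding ge using npos by (simp add: divide_right_mono)
  also have "(\<Sum>i<n. 2 * sqrt (2 * \<sigma>\<^sup>2 * I_JS MW \<mu> n K i)) / real n
      = 2 / real n * (\<Sum>i<n. sqrt (2 * \<sigma>\<^sup>2 * I_JS MW \<mu> n K i))"
    unfolding sum_distrib_left[symmetric] by simp
  finally show ?thesis .
qed


end
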